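(* Let $X$ be a real Banach space. The following statements are equivalent. (1) $X$ is LUR. (2) $r(P_{S_X}(x,\frac1n),P_{S_X}(x',\frac1n))\to\left\|\frac{x}{\|x\|}-\frac{x'}{\|x'\|}\right\|$ for every $x,x'\in X\setminus\{0\}$. (3) $\mathrm{diam}(P_{S_X}(x,\frac1n))\to0$ for every $x\in X\setminus\{0\}$. (4) For every $x\in X\setminus\{0\}$, every minimizing sequence in $S_X$ for $x$ converges to $\frac{x}{\|x\|}$. (5) For every $x\in X\setminus\{0\}$, $P_{S_X}(x)=\{\frac{x}{\|x\|}\}$ and $P_{S_X}(x,\frac1n)\xrightarrow{V}P_{S_X}(x)$. (6) For every $x\in X\setminus\{0\}$, $P_{S_X}(x)=\{\frac{x}{\|x\|}\}$ and $P_{S_X}(x,\frac1n)\xrightarrow{H}P_{S_X}(x)$. (7) $S_X$ is strongly Chebyshev on $X\setminus\{0\}$.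
   Context: $B_X,S_X$ are the closed unit ball and unit sphere of $X$. For non-empty closed $A\subseteq X$, $x\in X$, $\delta\ge0$: $P_A(x,\delta)=\{y\in A:\|x-y\|\le\inf_{z\in A}\|x-z\|+\delta\}$, $P_A(x)=P_A(x,0)$. A minimizing sequence in $A$ for $x$ is a sequence $(y_n)$ in $A$ with $\|x-y_n\|\to\inf_{z\in A}\|x-z\|$. $A$ is strongly Chebyshev on $D$ if for each $x\in D$, $P_A(x)$ is a singleton and for every $\epsilon>0$ there is $\delta>0$ with $P_A(x,\delta)\subseteq P_A(x)+\epsilon B_X$. For non-empty bounded $A,B$, $r(A,B)=\sup\{\|a-b\|:a\in A,b\in B\}$. $X$ is LUR if $x_n\to x$ whenever $x\in S_X$, $(x_n)\subseteq S_X$ and $\|\frac{x_n+x}{2}\|\to1$. For closed bounded sets $C_n,C_0$: $C_n\xrightarrow{V}C_0$ means both (a) for every open $U\supseteq C_0$, eventually $C_n\subseteq U$, and (b) for every open $U$ with $C_0\cap U\ne\emptyset$, eventually $C_n\cap U\neq\emptyset$; $C_n\xrightarrow{H}C_0$ means for every $\epsilon>0$, eventually $C_n\subseteq C_0+\epsilon B_X$ and $C_0\subseteq C_n+\epsilon B_X$. *)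

theory Defs
  imports "HOL-Analysis.Analysis"
begin

definition approx_proj :: "'a::real_normed_vector set \<Rightarrow> 'a \<Rightarrow> real \<Rightarrow> 'a set" where
  "approx_proj A x \<delta> = {y \<in> A. norm (x - y) \<le> (INF z\<in>A. norm (x - z)) + \<delta>}"

definition metric_proj :: "'a::real_normed_vector set \<Rightarrow> 'a \<Rightarrow> 'a set" where
  "metric_proj A x = approx_proj A x 0"

definition minimizing_seq :: "'a::real_normed_vector set \<Rightarrow> 'a \<Rightarrow> (nat \<Rightarrow> 'a) \<Rightarrow> bool" where
  "minimizing_seq A x y \<longleftrightarrow> (\<forall>n. y n \<in> A) \<and>
     ((\<lambda>n. norm (x - y n)) \<longlonglongrightarrow> (INF z\<in>A. norm (x - z)))"

definition enlarge :: "'a::real_normed_vector set \<Rightarrow> real \<Rightarrow> 'a set" where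
  "enlarge A \<epsilon> = {a + b | a b. a \<in> A \<and> b \<in> cball 0 \<epsilon>}"

definition strongly_chebyshev_on :: "'a::real_normed_vector set \<Rightarrow> 'a set \<Rightarrow> bool" where
  "strongly_chebyshev_on A D \<longleftrightarrow> (\<forall>x\<in>D. (\<exists>y. metric_proj A x = {y}) \<and>
     (\<forall>\<epsilon>>0. \<exists>\<delta>>0. approx_proj A x \<delta> \<subseteq> enlarge (metric_proj A x) \<epsilon>))"

definition rad :: "'a::real_normed_vector set \<Rightarrow> 'a set \<Rightarrow> real" where
  "rad A B = Sup {norm (a - b) | a b. a \<in> A \<and> b \<in> B}"

definition LUR :: "'a::real_normed_vector itself \<Rightarrow> bool" where
  "LUR _ \<longleftrightarrow> (\<forall>(x::'a) (xs::nat \<Rightarrow> 'a). x \<in> sphere 0 1 \<and> (\<forall>n. xs n \<in> sphere 0 1) \<and>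
      ((\<lambda>n. norm ((xs n + x) /\<^sub>R 2)) \<longlonglongrightarrow> 1) \<longrightarrow> xs \<longlonglongrightarrow> x)"

definition vietoris_conv :: "(nat \<Rightarrow> 'a::topological_space set) \<Rightarrow> 'a set \<Rightarrow> bool" where
  "vietoris_conv C C0 \<longleftrightarrow>
     (\<forall>U. open U \<and> C0 \<subseteq> U \<longrightarrow> (\<forall>\<^sub>F n in sequentially. C n \<subseteq> U)) \<and>
     (\<forall>U. open U \<and> C0 \<inter> U \<noteq> {} \<longrightarrow> (\<forall>\<^sub>F n in sequentially. C n \<inter> U \<noteq> {}))"

definition hausdorff_conv :: "(nat \<Rightarrow> 'a::real_normed_vector set) \<Rightarrow> 'a set \<Rightarrow> bool" where
  "hausdorff_conv C C0 \<longleftrightarrow> (\<forall>\<epsilon>>0. \<forall>\<^sub>F n in sequentially.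
     C n \<subseteq> enlarge C0 \<epsilon> \<and> C0 \<subseteq> enlarge (C n) \<epsilon>)"

end

theory Submission
  imports Defs
begin


lemma inf_sphere:
  fixes x :: "'a::real_normed_vector"
  assumes "x \<noteq> 0"
  shows "(INF z\<in>sphere 0 1. norm (x - z)) = \<bar>norm x - 1\<bar>"
    and "norm (x - x /\<^sub>R norm x) = \<bar>norm x - 1\<bar>"
    and "x /\<^sub>R norm x \<in> sphere 0 1"
proof -
  let ?u = "x /\<^sub>R norm x"
  show u: "?u \<in> sphere 0 1" using assms by simp
  have "x - ?u = (1 - 1 / norm x) *\<^sub>R x" by (simp add: algebra_simps divide_inverse)
  then have "norm (x - ?u) = \<bar>1 - 1 / norm x\<bar> * norm x" by simp
  also have "\<dots> = \<bar>(1 - 1 / norm x) * norm x\<bar>" by (simp add: abs_mult)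
  also have "(1 - 1 / norm x) * norm x = norm x - 1" using assms by (simp add: field_simps)
  finally show nu: "norm (x - ?u) = \<bar>norm x - 1\<bar>" .
  have bdd: "bdd_below ((\<lambda>z. norm (x - z)) ` sphere 0 1)" by (rule bdd_belowI[where m=0]) auto
  show "(INF z\<in>sphere 0 1. norm (x - z)) = \<bar>norm x - 1\<bar>"
  proof (rule antisym)
    have "(INF z\<in>sphere 0 1. norm (x - z)) \<le> norm (x - ?u)" by (rule cINF_lower[OF bdd u])
    then show "(INF z\<in>sphere 0 1. norm (x - z)) \<le> \<bar>norm x - 1\<bar>" using nu by (rule ord_le_eq_trans)
    show "\<bar>norm x - 1\<bar> \<le> (INF z\<in>sphere 0 1. norm (x - z))"
    proof (rule cINF_greatest)
      show "sphere (0::'a) 1 \<noteq> {}" using u by blast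
      fix z :: 'a assume "z \<in> sphere 0 1"
      then show "\<bar>norm x - 1\<bar> \<le> norm (x - z)"
        using norm_triangle_ineq3[of x z] by simp
    qed
  qed
qed

lemma approx_proj_mono: "d \<le> d' \<Longrightarrow> approx_proj A x d \<subseteq> approx_proj A x d'"
  unfolding approx_proj_def by auto

lemma u_in_approx:
  fixes x :: "'a::real_normed_vector"
  assumes "x \<noteq> 0" "d \<ge> 0"
  shows "x /\<^sub>R norm x \<in> approx_proj (sphere 0 1) x d"
  using inf_sphere[OF assms(1)] assms(2) unfolding approx_proj_def by simp

lemma F2:
  fixes x y :: "'a::real_normed_vector"
  assumes x: "x \<noteq> 0" and y: "norm y = 1" and d: "d \<ge> 0"
    and le: "norm (x - y) \<le> \<bar>norm x - 1\<bar> + d"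
  shows "norm (x /\<^sub>R norm x + y) \<ge> 2 - max 1 (1 / norm x) * d"
proof -
  let ?u = "x /\<^sub>R norm x" and ?t = "norm x"
  have t: "?t > 0" using x by simp
  have nu: "norm (x - ?u) = \<bar>?t - 1\<bar>" using inf_sphere[OF x] by simp
  show ?thesis
  proof (cases "?t \<ge> 1")
    case True
    have "x - (?u + y) /\<^sub>R 2 = ((x - ?u) + (x - y)) /\<^sub>R 2" by (simp add: algebra_simps flip: scaleR_add_left)
    then have "norm (x - (?u + y) /\<^sub>R 2) \<le> (norm (x - ?u) + norm (x - y)) / 2"
      using norm_triangle_ineq[of "x - ?u" "x - y"] by simp
    also have "\<dots> \<le> ?t - 1 + d / 2" using nu le True by simp
    finally have a: "norm (x - (?u + y) /\<^sub>R 2) \<le> ?t - 1 + d / 2" .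
    have "?t - norm ((?u + y) /\<^sub>R 2) \<le> norm (x - (?u + y) /\<^sub>R 2)"
      using norm_triangle_ineq2[of x "(?u + y) /\<^sub>R 2"] by simp
    with a have "norm ((?u + y) /\<^sub>R 2) \<ge> 1 - d / 2" by simp
    then have "norm (?u + y) \<ge> 2 - d" by simp
    moreover have "max 1 (1 / ?t) = 1" using True t by (simp add: field_simps)
    ultimately show ?thesis by simp
  next
    case False
    have eq: "?t *\<^sub>R (?u + y) = (x - y) + (1 + ?t) *\<^sub>R y" using t by (simp add: algebra_simps)
    have "norm ((1 + ?t) *\<^sub>R y) - norm (x - y) \<le> norm ((x - y) + (1 + ?t) *\<^sub>R y)"
    proof -
      have "norm ((1 + ?t) *\<^sub>R y) \<le> norm ((x - y) + (1 + ?t) *\<^sub>R y) + norm (x - y)"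
        using norm_triangle_ineq4[of "(x - y) + (1 + ?t) *\<^sub>R y" "x - y"] by simp
      then show ?thesis by linarith
    qed
    also have "\<dots> = ?t * norm (?u + y)" using eq t by (metis norm_scaleR abs_of_pos)
    finally have c: "norm ((1 + ?t) *\<^sub>R y) - norm (x - y) \<le> ?t * norm (?u + y)" .
    have "norm ((1 + ?t) *\<^sub>R y) = 1 + ?t" using y t by simp
    moreover have "\<bar>?t - 1\<bar> = 1 - ?t" using False by simp
    ultimately have "(1 + ?t) - (1 - ?t + d) \<le> ?t * norm (?u + y)" using c le by linarith
    then have "2 * ?t - d \<le> ?t * norm (?u + y)" by simp
    then have "2 - d / ?t \<le> norm (?u + y)" using t by (simp add: field_simps)
    moreover have "max 1 (1 / ?t) * d = d / ?t" using False t by (simp add: field_simps max_def)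
    ultimately show ?thesis by linarith
  qed
qed



definition unif :: "'a::real_normed_vector \<Rightarrow> bool" where
  "unif x \<longleftrightarrow> (\<forall>e>0. \<exists>d>0. \<forall>y\<in>approx_proj (sphere 0 1) x d. norm (y - x /\<^sub>R norm x) < e)"

lemma dist_ge:
  fixes x :: "'a::real_normed_vector"
  assumes "norm y = 1"
  shows "\<bar>norm x - 1\<bar> \<le> norm (x - y)"
  using norm_triangle_ineq3[of x y] assms by simp

lemma LUR_min:
  fixes x :: "'a::real_normed_vector"
  assumes L: "LUR TYPE('a)" and x: "x \<noteq> 0" and m: "minimizing_seq (sphere 0 1) x y"
  shows "y \<longlonglongrightarrow> x /\<^sub>R norm x"
proof -
  let ?u = "x /\<^sub>R norm x" and ?c = "max 1 (1 / norm x)" and ?d = "\<bar>norm x - 1\<bar>"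
  have yS: "\<And>n. norm (y n) = 1" using m unfolding minimizing_seq_def by auto
  have lim: "(\<lambda>n. norm (x - y n)) \<longlonglongrightarrow> ?d" using m inf_sphere(1)[OF x] unfolding minimizing_seq_def by simp
  have lo: "(2 - ?c * (norm (x - y n) - ?d)) / 2 \<le> norm ((y n + ?u) /\<^sub>R 2)" for n
  proof -
    have "2 - ?c * (norm (x - y n) - ?d) \<le> norm (?u + y n)"
      using F2[OF x yS[of n], of "norm (x - y n) - ?d"] dist_ge[OF yS[of n], of x] by simp
    then show ?thesis by (simp add: add.commute)
  qed
  have hi: "norm ((y n + ?u) /\<^sub>R 2) \<le> 1" for n
  proof -
    have "norm (y n + ?u) \<le> norm (y n) + norm ?u" by (rule norm_triangle_ineq)
    then show ?thesis using yS[of n] x by simp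
  qed
  have l0: "(\<lambda>n. norm (x - y n) - ?d) \<longlonglongrightarrow> 0"
    using tendsto_diff[OF lim tendsto_const[of ?d]] by simp
  have "(\<lambda>n. (2 - ?c * (norm (x - y n) - ?d)) / 2) \<longlonglongrightarrow> (2 - ?c * 0) / 2"
    by (intro tendsto_divide tendsto_diff tendsto_mult tendsto_const l0) simp
  then have l1: "(\<lambda>n. (2 - ?c * (norm (x - y n) - ?d)) / 2) \<longlonglongrightarrow> 1" by simp
  have "(\<lambda>n. norm ((y n + ?u) /\<^sub>R 2)) \<longlonglongrightarrow> 1"
    by (rule tendsto_sandwich[OF always_eventually always_eventually l1 tendsto_const]) (use lo hi in auto)
  moreover have "?u \<in> sphere 0 1" using x by simp
  ultimately show ?thesis using L yS unfolding LUR_def by auto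
qed

lemma min_unif:
  fixes x :: "'a::real_normed_vector"
  assumes x: "x \<noteq> 0" and H: "\<And>y. minimizing_seq (sphere 0 1) x y \<Longrightarrow> y \<longlonglongrightarrow> x /\<^sub>R norm x"
  shows "unif x"
proof (rule ccontr)
  let ?u = "x /\<^sub>R norm x" and ?d = "\<bar>norm x - 1\<bar>"
  assume "\<not> unif x"
  then obtain e where e: "e > 0" and
    E: "\<And>d. d > 0 \<Longrightarrow> \<exists>y\<in>approx_proj (sphere 0 1) x d. \<not> norm (y - ?u) < e"
    unfolding unif_def by auto
  have "\<forall>n. \<exists>y. y \<in> approx_proj (sphere 0 1) x (inverse (real (Suc n))) \<and> \<not> norm (y - ?u) < e"
  proof
    fix n
    have "inverse (real (Suc n)) > 0" by simp
    from E[OF this] show "\<exists>y. y \<in> approx_proj (sphere 0 1) x (inverse (real (Suc n))) \<and> \<not> norm (y - ?u) < e"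
      by blast
  qed
  then obtain y where y: "\<And>n. y n \<in> approx_proj (sphere 0 1) x (inverse (real (Suc n)))"
    and ye: "\<And>n. \<not> norm (y n - ?u) < e" by metis
  have yS: "\<And>n. norm (y n) = 1" and yle: "\<And>n. norm (x - y n) \<le> ?d + inverse (real (Suc n))"
    using y unfolding approx_proj_def inf_sphere(1)[OF x] by auto
  have "(\<lambda>n. norm (x - y n)) \<longlonglongrightarrow> ?d"
    by (rule tendsto_sandwich[OF always_eventually always_eventually tendsto_const LIMSEQ_inverse_real_of_nat_add])
      (use yle dist_ge[OF yS] in auto)
  then have "minimizing_seq (sphere 0 1) x y" unfolding minimizing_seq_def inf_sphere(1)[OF x] using yS by simp
  then have "y \<longlonglongrightarrow> ?u" by (rule H)
  from tendstoD[OF this e] obtain N where "\<And>n. n \<ge> N \<Longrightarrow> dist (y n) ?u < e"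
    unfolding eventually_sequentially by auto
  then have "norm (y N - ?u) < e" by (simp add: dist_norm)
  with ye show False by blast
qed

lemma unif_min:
  fixes x :: "'a::real_normed_vector"
  assumes U: "unif x" and x: "x \<noteq> 0" and m: "minimizing_seq (sphere 0 1) x y"
  shows "y \<longlonglongrightarrow> x /\<^sub>R norm x"
proof (rule tendstoI)
  fix e :: real assume e: "e > 0"
  let ?u = "x /\<^sub>R norm x" and ?d = "\<bar>norm x - 1\<bar>"
  obtain d where d: "d > 0" and D: "\<And>z. z \<in> approx_proj (sphere 0 1) x d \<Longrightarrow> norm (z - ?u) < e"
    using U e unfolding unif_def by blast
  have yS: "\<And>n. y n \<in> sphere 0 1" using m unfolding minimizing_seq_def by auto
  have lim: "(\<lambda>n. norm (x - y n)) \<longlonglongrightarrow> ?d" using m inf_sphere(1)[OF x] unfolding minimizing_seq_def by simp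
  have "?d < ?d + d" using d by simp
  from order_tendstoD(2)[OF lim this]
  show "\<forall>\<^sub>F n in sequentially. dist (y n) ?u < e"
  proof (rule eventually_mono)
    fix n assume "norm (x - y n) < ?d + d"
    then have "y n \<in> approx_proj (sphere 0 1) x d"
      using yS unfolding approx_proj_def inf_sphere(1)[OF x] by auto
    then show "dist (y n) ?u < e" using D by (simp add: dist_norm)
  qed
qed

lemma min_LUR:
  assumes H: "\<And>x::'a::real_normed_vector. \<And>y. x \<noteq> 0 \<Longrightarrow> minimizing_seq (sphere 0 1) x y \<Longrightarrow> y \<longlonglongrightarrow> x /\<^sub>R norm x"
  shows "LUR TYPE('a)"
  unfolding LUR_def
proof (intro allI impI, elim conjE)
  fix u :: 'a and ys :: "nat \<Rightarrow> 'a"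
  assume u: "u \<in> sphere 0 1" and ys: "\<forall>n. ys n \<in> sphere 0 1"
    and lim: "(\<lambda>n. norm ((ys n + u) /\<^sub>R 2)) \<longlonglongrightarrow> 1"
  define m where "m n = (ys n + u) /\<^sub>R 2" for n
  define w where "w n = (if m n = 0 then u else m n /\<^sub>R norm (m n))" for n
  define x where "x = u /\<^sub>R 2"
  have nu: "norm u = 1" using u by simp
  have x0: "x \<noteq> 0" using nu unfolding x_def by auto
  have nx: "norm x = 1 / 2" using nu unfolding x_def by simp
  have xu: "x /\<^sub>R norm x = u" using nx unfolding x_def by simp
  have wS: "w n \<in> sphere 0 1" for n using u unfolding w_def by simp
  have wm: "norm (w n - m n) = \<bar>1 - norm (m n)\<bar>" for n
  proof (cases "m n = 0")
    case True then show ?thesis using nu unfolding w_def by simp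
  next
    case False
    have "norm (m n - m n /\<^sub>R norm (m n)) = \<bar>norm (m n) - 1\<bar>" using inf_sphere(2)[OF False] .
    then show ?thesis using False unfolding w_def by (simp add: norm_minus_commute abs_minus_commute)
  qed
  have xm: "norm (x - m n) = 1 / 2" for n
  proof -
    have "x - m n = - (ys n /\<^sub>R 2)" unfolding x_def m_def by (simp add: algebra_simps)
    then show ?thesis using ys by simp
  qed
  have l0: "(\<lambda>n. \<bar>1 - norm (m n)\<bar>) \<longlonglongrightarrow> 0"
  proof -
    have "(\<lambda>n. \<bar>1 - norm (m n)\<bar>) \<longlonglongrightarrow> \<bar>1 - 1\<bar>"
      using lim unfolding m_def by (intro tendsto_intros)
    then show ?thesis by simp
  qed
  have bnd: "\<bar>norm (x - w n) - 1 / 2\<bar> \<le> \<bar>1 - norm (m n)\<bar>" for n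
  proof -
    have "\<bar>norm (x - w n) - norm (x - m n)\<bar> \<le> norm ((x - w n) - (x - m n))" by (rule norm_triangle_ineq3)
    also have "(x - w n) - (x - m n) = - (w n - m n)" by simp
    finally show ?thesis using wm[of n] xm[of n] by (simp add: norm_minus_commute)
  qed
  have A1: "(\<lambda>n. 1 / 2 - \<bar>1 - norm (m n)\<bar>) \<longlonglongrightarrow> (1 / 2 :: real)"
    using tendsto_diff[OF tendsto_const[of "1/2::real"] l0] by simp
  have A2: "(\<lambda>n. 1 / 2 + \<bar>1 - norm (m n)\<bar>) \<longlonglongrightarrow> (1 / 2 :: real)"
    using tendsto_add[OF tendsto_const[of "1/2::real"] l0] by simp
  have "(\<lambda>n. norm (x - w n)) \<longlonglongrightarrow> 1 / 2"
  proof (rule tendsto_sandwich[OF always_eventually always_eventually A1 A2])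
    show "\<forall>n. 1 / 2 - \<bar>1 - norm (m n)\<bar> \<le> norm (x - w n)"
    proof
      fix n show "1 / 2 - \<bar>1 - norm (m n)\<bar> \<le> norm (x - w n)"
        using bnd[of n] unfolding abs_le_iff by linarith
    qed
    show "\<forall>n. norm (x - w n) \<le> 1 / 2 + \<bar>1 - norm (m n)\<bar>"
    proof
      fix n show "norm (x - w n) \<le> 1 / 2 + \<bar>1 - norm (m n)\<bar>"
        using bnd[of n] unfolding abs_le_iff by linarith
    qed
  qed
  then have "minimizing_seq (sphere 0 1) x w"
    unfolding minimizing_seq_def inf_sphere(1)[OF x0] nx using wS by simp
  then have wl: "w \<longlonglongrightarrow> u" using H[OF x0] xu by simp
  have "(\<lambda>n. w n - m n) \<longlonglongrightarrow> 0"
    by (rule tendsto_norm_zero_cancel) (use wm l0 in simp)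
  then have "(\<lambda>n. w n - (w n - m n)) \<longlonglongrightarrow> u - 0" by (intro tendsto_intros wl)
  then have "m \<longlonglongrightarrow> u" by simp
  then have "(\<lambda>n. 2 *\<^sub>R m n - u) \<longlonglongrightarrow> 2 *\<^sub>R u - u" by (intro tendsto_intros)
  moreover have "2 *\<^sub>R m n - u = ys n" for n unfolding m_def by (simp add: algebra_simps)
  moreover have "2 *\<^sub>R u - u = u" by (simp add: scaleR_2)
  ultimately show "ys \<longlonglongrightarrow> u" by simp
qed



lemma cb_iff: "y \<in> cball u r \<longleftrightarrow> norm (y - u) \<le> r"
  by (simp add: dist_norm norm_minus_commute)

lemma b_iff: "y \<in> ball u r \<longleftrightarrow> norm (y - u) < r"
  by (simp add: dist_norm norm_minus_commute)

lemma sub_cball_lt: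
  assumes "A \<subseteq> cball u r" "r < e" shows "\<forall>y\<in>A. norm (y - u) < e"
proof
  fix y assume "y \<in> A"
  then have "norm (y - u) \<le> r" using assms(1) cb_iff by blast
  then show "norm (y - u) < e" using assms(2) by linarith
qed

lemma lt_sub_cball:
  assumes "\<forall>y\<in>A. norm (y - u) < e" shows "A \<subseteq> cball u e"
proof
  fix y assume "y \<in> A"
  then have "norm (y - u) < e" using assms by blast
  then show "y \<in> cball u e" unfolding cb_iff by linarith
qed

lemma lt_sub_ball:
  assumes "\<forall>y\<in>A. norm (y - u) < e" shows "A \<subseteq> ball u e"
  using assms b_iff by blast

lemma ball_lt:
  assumes "A \<subseteq> ball u e" shows "\<forall>y\<in>A. norm (y - u) < e"
  using assms b_iff by blast

lemma unif_ev:
  fixes x :: "'a::real_normed_vector"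
  assumes U: "unif x" and e: "e > 0"
  shows "\<forall>\<^sub>F n in sequentially. \<forall>y\<in>approx_proj (sphere 0 1) x (1 / real n). norm (y - x /\<^sub>R norm x) < e"
proof -
  obtain d where d: "d > 0" and D: "\<forall>y\<in>approx_proj (sphere 0 1) x d. norm (y - x /\<^sub>R norm x) < e"
    using U e unfolding unif_def by blast
  have "\<forall>\<^sub>F n in sequentially. 1 / real n < d"
    using order_tendstoD(2)[OF lim_1_over_n d] by simp
  then show ?thesis
  proof (rule eventually_mono)
    fix n assume "1 / real n < d"
    then have "approx_proj (sphere 0 1) x (1 / real n) \<subseteq> approx_proj (sphere 0 1) x d"
      by (intro approx_proj_mono) simp
    then show "\<forall>y\<in>approx_proj (sphere 0 1) x (1 / real n). norm (y - x /\<^sub>R norm x) < e" using D by blast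
  qed
qed

lemma ev_unif:
  fixes x :: "'a::real_normed_vector"
  assumes H: "\<And>e. e > 0 \<Longrightarrow> \<forall>\<^sub>F n in sequentially. \<forall>y\<in>approx_proj (sphere 0 1) x (1 / real n). norm (y - x /\<^sub>R norm x) < e"
  shows "unif x"
  unfolding unif_def
proof (intro allI impI)
  fix e :: real assume "e > 0"
  from H[OF this] obtain N where N: "\<And>n. n \<ge> N \<Longrightarrow> \<forall>y\<in>approx_proj (sphere 0 1) x (1 / real n). norm (y - x /\<^sub>R norm x) < e"
    unfolding eventually_sequentially by blast
  show "\<exists>d>0. \<forall>y\<in>approx_proj (sphere 0 1) x d. norm (y - x /\<^sub>R norm x) < e"
    by (rule exI[of _ "1 / real (Suc N)"]) (use N[of "Suc N"] in auto)
qed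

lemma unif_proj:
  fixes x :: "'a::real_normed_vector"
  assumes U: "unif x" and x: "x \<noteq> 0"
  shows "metric_proj (sphere 0 1) x = {x /\<^sub>R norm x}"
proof
  show "{x /\<^sub>R norm x} \<subseteq> metric_proj (sphere 0 1) x"
    using u_in_approx[OF x, of 0] unfolding metric_proj_def by simp
  show "metric_proj (sphere 0 1) x \<subseteq> {x /\<^sub>R norm x}"
  proof
    fix y assume y: "y \<in> metric_proj (sphere 0 1) x"
    have "y = x /\<^sub>R norm x"
    proof (rule ccontr)
      assume "y \<noteq> x /\<^sub>R norm x"
      then have "norm (y - x /\<^sub>R norm x) > 0" by simp
      then obtain d where d: "d > 0" and D: "\<forall>z\<in>approx_proj (sphere 0 1) x d. norm (z - x /\<^sub>R norm x) < norm (y - x /\<^sub>R norm x)"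
        using U unfolding unif_def by blast
      have "y \<in> approx_proj (sphere 0 1) x d"
        using approx_proj_mono[of 0 d] d y unfolding metric_proj_def by auto
      with D show False by blast
    qed
    then show "y \<in> {x /\<^sub>R norm x}" by simp
  qed
qed

lemma enlarge_singleton: "enlarge {u} e = cball u e"
  unfolding enlarge_def
proof (intro set_eqI iffI)
  fix y assume "y \<in> {a + b |a b. a \<in> {u} \<and> b \<in> cball 0 e}"
  then show "y \<in> cball u e" by (auto simp: dist_norm)
next
  fix y assume "y \<in> cball u e"
  then show "y \<in> {a + b |a b. a \<in> {u} \<and> b \<in> cball 0 e}"
    by (intro CollectI exI[of _ u] exI[of _ "y - u"]) (auto simp: dist_norm norm_minus_commute)
qed

lemma bounded_ap: fixes x :: "'a::real_normed_vector" shows "bounded (approx_proj (sphere 0 1) x d)"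
proof (rule bounded_subset)
  show "bounded (cball (0::'a) 1)" by simp
  show "approx_proj (sphere 0 1) x d \<subseteq> cball 0 1" by (auto simp: approx_proj_def)
qed

lemma rad_upper:
  fixes a b :: "'a::real_normed_vector"
  assumes "A \<subseteq> sphere 0 1" "B \<subseteq> sphere 0 1" "a \<in> A" "b \<in> B"
  shows "norm (a - b) \<le> rad A B"
  unfolding rad_def
proof (rule cSup_upper)
  show "norm (a - b) \<in> {norm (a - b) |a b. a \<in> A \<and> b \<in> B}" using assms by blast
  show "bdd_above {norm (a - b) |a b. a \<in> A \<and> b \<in> B}"
  proof (rule bdd_aboveI[where M=2])
    fix t assume "t \<in> {norm (a - b) |a b. a \<in> A \<and> b \<in> B}"
    then obtain a' b' where t: "t = norm (a' - b')" "a' \<in> A" "b' \<in> B" by blast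
    have "norm (a' - b') \<le> norm a' + norm b'" by (rule norm_triangle_ineq4)
    moreover have "norm a' = 1" "norm b' = 1" using t(2,3) assms(1,2) by auto
    ultimately show "t \<le> 2" using t(1) by simp
  qed
qed

lemma rad_least:
  fixes A B :: "'a::real_normed_vector set"
  assumes "A \<noteq> {}" "B \<noteq> {}" "\<And>a b. a \<in> A \<Longrightarrow> b \<in> B \<Longrightarrow> norm (a - b) \<le> c"
  shows "rad A B \<le> c"
  unfolding rad_def using assms by (intro cSup_least) auto

lemma ap_sub: "approx_proj (sphere 0 1) x d \<subseteq> sphere 0 1"
  by (auto simp: approx_proj_def)

lemma E_diam:
  fixes x :: "'a::real_normed_vector"
  assumes x: "x \<noteq> 0"
  shows "((\<lambda>n. diameter (approx_proj (sphere 0 1) x (1 / real n))) \<longlonglongrightarrow> 0) \<longleftrightarrow> unif x"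
proof
  let ?u = "x /\<^sub>R norm x"
  assume L: "(\<lambda>n. diameter (approx_proj (sphere 0 1) x (1 / real n))) \<longlonglongrightarrow> 0"
  show "unif x"
  proof (rule ev_unif)
    fix e :: real assume e: "e > 0"
    from tendstoD[OF L e] show "\<forall>\<^sub>F n in sequentially. \<forall>y\<in>approx_proj (sphere 0 1) x (1 / real n). norm (y - ?u) < e"
    proof (rule eventually_mono)
      fix n assume n: "dist (diameter (approx_proj (sphere 0 1) x (1 / real n))) 0 < e"
      show "\<forall>y\<in>approx_proj (sphere 0 1) x (1 / real n). norm (y - ?u) < e"
      proof
        fix y assume y: "y \<in> approx_proj (sphere 0 1) x (1 / real n)"
        have "dist y ?u \<le> diameter (approx_proj (sphere 0 1) x (1 / real n))"
          by (rule diameter_bounded_bound[OF bounded_ap y u_in_approx[OF x]]) simp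
        then show "norm (y - ?u) < e" using n by (simp add: dist_norm)
      qed
    qed
  qed
next
  let ?u = "x /\<^sub>R norm x"
  assume U: "unif x"
  show "(\<lambda>n. diameter (approx_proj (sphere 0 1) x (1 / real n))) \<longlonglongrightarrow> 0"
  proof (rule tendstoI)
    fix e :: real assume e: "e > 0"
    then have e3: "e / 3 > 0" by simp
    from unif_ev[OF U e3]
    show "\<forall>\<^sub>F n in sequentially. dist (diameter (approx_proj (sphere 0 1) x (1 / real n))) 0 < e"
    proof (rule eventually_mono)
      fix n assume n: "\<forall>y\<in>approx_proj (sphere 0 1) x (1 / real n). norm (y - ?u) < e / 3"
      have "diameter (approx_proj (sphere 0 1) x (1 / real n)) \<le> 2 * e / 3"
      proof (rule diameter_le)
        show "approx_proj (sphere 0 1) x (1 / real n) \<noteq> {} \<or> 0 \<le> 2 * e / 3" using e by simp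
        fix a b assume a: "a \<in> approx_proj (sphere 0 1) x (1 / real n)" and b: "b \<in> approx_proj (sphere 0 1) x (1 / real n)"
        have "norm (a - b) \<le> norm (a - ?u) + norm (b - ?u)"
          using norm_triangle_ineq4[of "a - ?u" "b - ?u"] by simp
        moreover have "norm (a - ?u) < e / 3" "norm (b - ?u) < e / 3" using n a b by auto
        ultimately show "norm (a - b) \<le> 2 * e / 3" by linarith
      qed
      moreover have "0 \<le> diameter (approx_proj (sphere 0 1) x (1 / real n))" by (rule diameter_ge_0[OF bounded_ap])
      ultimately show "dist (diameter (approx_proj (sphere 0 1) x (1 / real n))) 0 < e" using e by simp
    qed
  qed
qed

lemma E_viet:
  fixes x :: "'a::real_normed_vector"
  assumes x: "x \<noteq> 0"
  shows "(metric_proj (sphere 0 1) x = {x /\<^sub>R norm x} \<and>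
          vietoris_conv (\<lambda>n. approx_proj (sphere 0 1) x (1 / real n)) (metric_proj (sphere 0 1) x)) \<longleftrightarrow> unif x"
proof
  let ?u = "x /\<^sub>R norm x"
  assume A: "metric_proj (sphere 0 1) x = {?u} \<and> vietoris_conv (\<lambda>n. approx_proj (sphere 0 1) x (1 / real n)) (metric_proj (sphere 0 1) x)"
  show "unif x"
  proof (rule ev_unif)
    fix e :: real assume e: "e > 0"
    have o: "open (ball ?u e)" "metric_proj (sphere 0 1) x \<subseteq> ball ?u e" using A e by auto
    have "\<forall>\<^sub>F n in sequentially. approx_proj (sphere 0 1) x (1 / real n) \<subseteq> ball ?u e"
      using A o unfolding vietoris_conv_def by blast
    then show "\<forall>\<^sub>F n in sequentially. \<forall>y\<in>approx_proj (sphere 0 1) x (1 / real n). norm (y - ?u) < e"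
      by (rule eventually_mono) (rule ball_lt)
  qed
next
  let ?u = "x /\<^sub>R norm x"
  assume U: "unif x"
  have P: "metric_proj (sphere 0 1) x = {?u}" by (rule unif_proj[OF U x])
  have V1: "\<forall>\<^sub>F n in sequentially. approx_proj (sphere 0 1) x (1 / real n) \<subseteq> W"
    if W: "open W" "{?u} \<subseteq> W" for W
  proof -
    obtain e where e: "e > 0" "ball ?u e \<subseteq> W" using W open_contains_ball by blast
    from unif_ev[OF U e(1)] show ?thesis
      by (rule eventually_mono) (use e(2) lt_sub_ball in blast)
  qed
  have V2: "\<forall>\<^sub>F n in sequentially. approx_proj (sphere 0 1) x (1 / real n) \<inter> W \<noteq> {}"
    if W: "{?u} \<inter> W \<noteq> {}" for W
  proof (rule always_eventually, rule allI)
    fix n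
    have "?u \<in> approx_proj (sphere 0 1) x (1 / real n)" by (rule u_in_approx[OF x]) simp
    then show "approx_proj (sphere 0 1) x (1 / real n) \<inter> W \<noteq> {}" using W by blast
  qed
  show "metric_proj (sphere 0 1) x = {?u} \<and> vietoris_conv (\<lambda>n. approx_proj (sphere 0 1) x (1 / real n)) (metric_proj (sphere 0 1) x)"
    unfolding P vietoris_conv_def using V1 V2 by blast
qed

lemma E_haus:
  fixes x :: "'a::real_normed_vector"
  assumes x: "x \<noteq> 0"
  shows "(metric_proj (sphere 0 1) x = {x /\<^sub>R norm x} \<and>
          hausdorff_conv (\<lambda>n. approx_proj (sphere 0 1) x (1 / real n)) (metric_proj (sphere 0 1) x)) \<longleftrightarrow> unif x"
proof
  let ?u = "x /\<^sub>R norm x"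
  assume A: "metric_proj (sphere 0 1) x = {?u} \<and> hausdorff_conv (\<lambda>n. approx_proj (sphere 0 1) x (1 / real n)) (metric_proj (sphere 0 1) x)"
  show "unif x"
  proof (rule ev_unif)
    fix e :: real assume e: "e > 0"
    then have e2: "e / 2 > 0" by simp
    have h: "hausdorff_conv (\<lambda>n. approx_proj (sphere 0 1) x (1 / real n)) {?u}"
    proof -
      from A have e1: "metric_proj (sphere 0 1) x = {?u}"
        and h1: "hausdorff_conv (\<lambda>n. approx_proj (sphere 0 1) x (1 / real n)) (metric_proj (sphere 0 1) x)"
        by blast+
      from h1 show ?thesis unfolding e1 .
    qed
    have lt: "e / 2 < e" using e by simp
    have "\<forall>\<^sub>F n in sequentially. approx_proj (sphere 0 1) x (1 / real n) \<subseteq> enlarge {?u} (e / 2) \<and>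
            {?u} \<subseteq> enlarge (approx_proj (sphere 0 1) x (1 / real n)) (e / 2)"
      using h e2 unfolding hausdorff_conv_def by blast
    then show "\<forall>\<^sub>F n in sequentially. \<forall>y\<in>approx_proj (sphere 0 1) x (1 / real n). norm (y - ?u) < e"
    proof (rule eventually_mono)
      fix n assume "approx_proj (sphere 0 1) x (1 / real n) \<subseteq> enlarge {?u} (e / 2) \<and>
            {?u} \<subseteq> enlarge (approx_proj (sphere 0 1) x (1 / real n)) (e / 2)"
      then have "approx_proj (sphere 0 1) x (1 / real n) \<subseteq> cball ?u (e / 2)" unfolding enlarge_singleton by blast
      then show "\<forall>y\<in>approx_proj (sphere 0 1) x (1 / real n). norm (y - ?u) < e" using lt by (rule sub_cball_lt)
    qed
  qed
next
  let ?u = "x /\<^sub>R norm x"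
  assume U: "unif x"
  have P: "metric_proj (sphere 0 1) x = {?u}" by (rule unif_proj[OF U x])
  have H: "\<forall>\<^sub>F n in sequentially. approx_proj (sphere 0 1) x (1 / real n) \<subseteq> enlarge {?u} e \<and>
            {?u} \<subseteq> enlarge (approx_proj (sphere 0 1) x (1 / real n)) e" if e: "e > 0" for e
  proof -
    from unif_ev[OF U e] show ?thesis
    proof (rule eventually_mono)
      fix n assume n: "\<forall>y\<in>approx_proj (sphere 0 1) x (1 / real n). norm (y - ?u) < e"
      have "approx_proj (sphere 0 1) x (1 / real n) \<subseteq> enlarge {?u} e"
        unfolding enlarge_singleton using n by (rule lt_sub_cball)
      moreover have "?u \<in> approx_proj (sphere 0 1) x (1 / real n)" by (rule u_in_approx[OF x]) simp
      then have "?u = ?u + 0 \<and> ?u \<in> approx_proj (sphere 0 1) x (1 / real n) \<and> 0 \<in> cball 0 e"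
        using e by simp
      then have "{?u} \<subseteq> enlarge (approx_proj (sphere 0 1) x (1 / real n)) e"
        unfolding enlarge_def by blast
      ultimately show "approx_proj (sphere 0 1) x (1 / real n) \<subseteq> enlarge {?u} e \<and>
            {?u} \<subseteq> enlarge (approx_proj (sphere 0 1) x (1 / real n)) e" by blast
    qed
  qed
  show "metric_proj (sphere 0 1) x = {?u} \<and> hausdorff_conv (\<lambda>n. approx_proj (sphere 0 1) x (1 / real n)) (metric_proj (sphere 0 1) x)"
    unfolding P hausdorff_conv_def using H by blast
qed

lemma E_cheb:
  fixes x :: "'a::real_normed_vector"
  assumes x: "x \<noteq> 0"
  shows "((\<exists>y. metric_proj (sphere 0 1) x = {y}) \<and>
     (\<forall>e>0. \<exists>d>0. approx_proj (sphere 0 1) x d \<subseteq> enlarge (metric_proj (sphere 0 1) x) e)) \<longleftrightarrow> unif x"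
proof
  let ?u = "x /\<^sub>R norm x"
  assume A: "(\<exists>y. metric_proj (sphere 0 1) x = {y}) \<and>
     (\<forall>e>0. \<exists>d>0. approx_proj (sphere 0 1) x d \<subseteq> enlarge (metric_proj (sphere 0 1) x) e)"
  then obtain y where y: "metric_proj (sphere 0 1) x = {y}" by blast
  have "?u \<in> metric_proj (sphere 0 1) x" using u_in_approx[OF x, of 0] unfolding metric_proj_def by simp
  then have P: "metric_proj (sphere 0 1) x = {?u}" using y by simp
  show "unif x" unfolding unif_def
  proof (intro allI impI)
    fix e :: real assume e: "e > 0"
    then have "e / 2 > 0" by simp
    then obtain d where d: "d > 0" "approx_proj (sphere 0 1) x d \<subseteq> cball ?u (e / 2)"
      using A unfolding P enlarge_singleton by blast
    show "\<exists>d>0. \<forall>y\<in>approx_proj (sphere 0 1) x d. norm (y - ?u) < e"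
    proof (rule exI[of _ d], intro conjI)
      show "d > 0" using d by simp
      show "\<forall>y\<in>approx_proj (sphere 0 1) x d. norm (y - ?u) < e"
        by (rule sub_cball_lt[OF d(2)]) (use e in simp)
    qed
  qed
next
  let ?u = "x /\<^sub>R norm x"
  assume U: "unif x"
  have P: "metric_proj (sphere 0 1) x = {?u}" by (rule unif_proj[OF U x])
  show "(\<exists>y. metric_proj (sphere 0 1) x = {y}) \<and>
     (\<forall>e>0. \<exists>d>0. approx_proj (sphere 0 1) x d \<subseteq> enlarge (metric_proj (sphere 0 1) x) e)"
    unfolding P enlarge_singleton
  proof (intro conjI exI[of _ ?u] refl allI impI)
    fix e :: real assume "e > 0"
    then obtain d where "d > 0" "\<forall>y\<in>approx_proj (sphere 0 1) x d. norm (y - ?u) < e"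
      using U unfolding unif_def by blast
    then show "\<exists>d>0. approx_proj (sphere 0 1) x d \<subseteq> cball ?u e"
      by (intro exI[of _ d] conjI lt_sub_cball)
  qed
qed

lemma E_rad:
  "(\<forall>x x'::'a::real_normed_vector. x \<noteq> 0 \<and> x' \<noteq> 0 \<longrightarrow>
         (\<lambda>n. rad (approx_proj (sphere 0 1) x (1 / real n)) (approx_proj (sphere 0 1) x' (1 / real n)))
           \<longlonglongrightarrow> norm (x /\<^sub>R norm x - x' /\<^sub>R norm x')) \<longleftrightarrow> (\<forall>x::'a. x \<noteq> 0 \<longrightarrow> unif x)"
proof (intro iffI allI impI)
  fix x :: 'a assume A: "\<forall>x x'::'a. x \<noteq> 0 \<and> x' \<noteq> 0 \<longrightarrow>
         (\<lambda>n. rad (approx_proj (sphere 0 1) x (1 / real n)) (approx_proj (sphere 0 1) x' (1 / real n)))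
           \<longlonglongrightarrow> norm (x /\<^sub>R norm x - x' /\<^sub>R norm x')" and x: "x \<noteq> 0"
  let ?u = "x /\<^sub>R norm x"
  have L: "(\<lambda>n. rad (approx_proj (sphere 0 1) x (1 / real n)) (approx_proj (sphere 0 1) x (1 / real n))) \<longlonglongrightarrow> 0"
  proof -
    have "(\<lambda>n. rad (approx_proj (sphere 0 1) x (1 / real n)) (approx_proj (sphere 0 1) x (1 / real n))) \<longlonglongrightarrow> norm (?u - ?u)"
      using A x by blast
    then show ?thesis by simp
  qed
  show "unif x"
  proof (rule ev_unif)
    fix e :: real assume e: "e > 0"
    from tendstoD[OF L e] show "\<forall>\<^sub>F n in sequentially. \<forall>y\<in>approx_proj (sphere 0 1) x (1 / real n). norm (y - ?u) < e"
    proof (rule eventually_mono)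
      fix n assume n: "dist (rad (approx_proj (sphere 0 1) x (1 / real n)) (approx_proj (sphere 0 1) x (1 / real n))) 0 < e"
      show "\<forall>y\<in>approx_proj (sphere 0 1) x (1 / real n). norm (y - ?u) < e"
      proof
        fix y assume y: "y \<in> approx_proj (sphere 0 1) x (1 / real n)"
        have "norm (y - ?u) \<le> rad (approx_proj (sphere 0 1) x (1 / real n)) (approx_proj (sphere 0 1) x (1 / real n))"
          by (rule rad_upper[OF ap_sub ap_sub y u_in_approx[OF x]]) simp
        then show "norm (y - ?u) < e" using n by (simp add: dist_norm)
      qed
    qed
  qed
next
  fix x x' :: 'a
  assume U: "\<forall>x::'a. x \<noteq> 0 \<longrightarrow> unif x" and xx: "x \<noteq> 0 \<and> x' \<noteq> 0"
  then have x: "x \<noteq> 0" and x': "x' \<noteq> 0" and Ux: "unif x" and Ux': "unif x'" by auto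
  let ?u = "x /\<^sub>R norm x" and ?v = "x' /\<^sub>R norm x'"
  show "(\<lambda>n. rad (approx_proj (sphere 0 1) x (1 / real n)) (approx_proj (sphere 0 1) x' (1 / real n)))
           \<longlonglongrightarrow> norm (?u - ?v)"
  proof (rule tendstoI)
    fix e :: real assume e: "e > 0"
    then have e3: "e / 3 > 0" by simp
    have ev: "\<forall>\<^sub>F n in sequentially. (\<forall>y\<in>approx_proj (sphere 0 1) x (1 / real n). norm (y - ?u) < e / 3) \<and>
       (\<forall>y\<in>approx_proj (sphere 0 1) x' (1 / real n). norm (y - ?v) < e / 3)"
      by (rule eventually_conj[OF unif_ev[OF Ux e3] unif_ev[OF Ux' e3]])
    then show "\<forall>\<^sub>F n in sequentially. dist (rad (approx_proj (sphere 0 1) x (1 / real n)) (approx_proj (sphere 0 1) x' (1 / real n))) (norm (?u - ?v)) < e"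
    proof (rule eventually_mono)
      fix n
      let ?A = "approx_proj (sphere 0 1) x (1 / real n)" and ?B = "approx_proj (sphere 0 1) x' (1 / real n)"
      assume n: "(\<forall>y\<in>?A. norm (y - ?u) < e / 3) \<and> (\<forall>y\<in>?B. norm (y - ?v) < e / 3)"
      have uA: "?u \<in> ?A" by (rule u_in_approx[OF x]) simp
      have vB: "?v \<in> ?B" by (rule u_in_approx[OF x']) simp
      have lo: "norm (?u - ?v) \<le> rad ?A ?B" by (rule rad_upper[OF ap_sub ap_sub uA vB])
      have hi: "rad ?A ?B \<le> norm (?u - ?v) + 2 * e / 3"
      proof (rule rad_least)
        show "?A \<noteq> {}" "?B \<noteq> {}" using uA vB by auto
        fix a b assume a: "a \<in> ?A" and b: "b \<in> ?B"
        have "a - b = (a - ?u) + (?u - ?v) - (b - ?v)" by (simp add: algebra_simps)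
        then have "norm (a - b) = norm ((a - ?u) + (?u - ?v) - (b - ?v))" by (rule arg_cong[where f=norm])
        moreover have "norm ((a - ?u) + (?u - ?v) - (b - ?v)) \<le> norm ((a - ?u) + (?u - ?v)) + norm (b - ?v)"
          by (rule norm_triangle_ineq4)
        moreover have "norm ((a - ?u) + (?u - ?v)) \<le> norm (a - ?u) + norm (?u - ?v)"
          by (rule norm_triangle_ineq)
        moreover have "norm (a - ?u) < e / 3" "norm (b - ?v) < e / 3" using n a b by auto
        ultimately show "norm (a - b) \<le> norm (?u - ?v) + 2 * e / 3" by linarith
      qed
      show "dist (rad ?A ?B) (norm (?u - ?v)) < e" using lo hi e by (simp add: dist_real_def)
    qed
  qed
qed


theorem corollary3p8:
  fixes X :: "'a::banach itself"
  defines "S \<equiv> sphere (0::'a) 1"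
  shows
   "(LUR X \<longleftrightarrow>
      (\<forall>x x'. x \<noteq> 0 \<and> x' \<noteq> 0 \<longrightarrow>
         (\<lambda>n. rad (approx_proj S x (1 / real n)) (approx_proj S x' (1 / real n)))
           \<longlonglongrightarrow> norm (x /\<^sub>R norm x - x' /\<^sub>R norm x')))
    \<and> (LUR X \<longleftrightarrow>
      (\<forall>x. x \<noteq> 0 \<longrightarrow> (\<lambda>n. diameter (approx_proj S x (1 / real n))) \<longlonglongrightarrow> 0))
    \<and> (LUR X \<longleftrightarrow>
      (\<forall>x. x \<noteq> 0 \<longrightarrow> (\<forall>y. minimizing_seq S x y \<longrightarrow> y \<longlonglongrightarrow> x /\<^sub>R norm x)))
    \<and> (LUR X \<longleftrightarrow>
      (\<forall>x. x \<noteq> 0 \<longrightarrow> metric_proj S x = {x /\<^sub>R norm x} \<and>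
          vietoris_conv (\<lambda>n. approx_proj S x (1 / real n)) (metric_proj S x)))
    \<and> (LUR X \<longleftrightarrow>
      (\<forall>x. x \<noteq> 0 \<longrightarrow> metric_proj S x = {x /\<^sub>R norm x} \<and>
          hausdorff_conv (\<lambda>n. approx_proj S x (1 / real n)) (metric_proj S x)))
    \<and> (LUR X \<longleftrightarrow> strongly_chebyshev_on S (UNIV - {0}))"
proof -
  have XX: "LUR X = LUR TYPE('a)" by (simp add: LUR_def)
  have L: "LUR TYPE('a) \<longleftrightarrow> (\<forall>x::'a. x \<noteq> 0 \<longrightarrow> unif x)"
  proof
    assume LL: "LUR TYPE('a)"
    show "\<forall>x::'a. x \<noteq> 0 \<longrightarrow> unif x"
    proof (intro allI impI)
      fix x :: 'a assume x: "x \<noteq> 0"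
      show "unif x" by (rule min_unif[OF x]) (rule LUR_min[OF LL x])
    qed
  next
    assume U: "\<forall>x::'a. x \<noteq> 0 \<longrightarrow> unif x"
    show "LUR TYPE('a)"
    proof (rule min_LUR)
      fix x :: 'a and y assume x: "x \<noteq> 0" and m: "minimizing_seq (sphere 0 1) x y"
      show "y \<longlonglongrightarrow> x /\<^sub>R norm x" by (rule unif_min[OF _ x m]) (use U x in blast)
    qed
  qed
  have E4: "(\<forall>x::'a. x \<noteq> 0 \<longrightarrow> (\<forall>y. minimizing_seq (sphere 0 1) x y \<longrightarrow> y \<longlonglongrightarrow> x /\<^sub>R norm x))
      \<longleftrightarrow> (\<forall>x::'a. x \<noteq> 0 \<longrightarrow> unif x)"
  proof (intro iffI allI impI)
    fix x :: 'a assume A: "\<forall>x::'a. x \<noteq> 0 \<longrightarrow> (\<forall>y. minimizing_seq (sphere 0 1) x y \<longrightarrow> y \<longlonglongrightarrow> x /\<^sub>R norm x)"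
      and x: "x \<noteq> 0"
    show "unif x" by (rule min_unif[OF x]) (use A x in blast)
  next
    fix x :: 'a and y assume U: "\<forall>x::'a. x \<noteq> 0 \<longrightarrow> unif x" and x: "x \<noteq> 0"
      and m: "minimizing_seq (sphere 0 1) x y"
    show "y \<longlonglongrightarrow> x /\<^sub>R norm x" by (rule unif_min[OF _ x m]) (use U x in blast)
  qed
  have E3: "(\<forall>x::'a. x \<noteq> 0 \<longrightarrow> (\<lambda>n. diameter (approx_proj (sphere 0 1) x (1 / real n))) \<longlonglongrightarrow> 0)
      \<longleftrightarrow> (\<forall>x::'a. x \<noteq> 0 \<longrightarrow> unif x)"
    using E_diam by blast
  have E5: "(\<forall>x::'a. x \<noteq> 0 \<longrightarrow> metric_proj (sphere 0 1) x = {x /\<^sub>R norm x} \<and>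
          vietoris_conv (\<lambda>n. approx_proj (sphere 0 1) x (1 / real n)) (metric_proj (sphere 0 1) x))
      \<longleftrightarrow> (\<forall>x::'a. x \<noteq> 0 \<longrightarrow> unif x)"
    using E_viet by blast
  have E6: "(\<forall>x::'a. x \<noteq> 0 \<longrightarrow> metric_proj (sphere 0 1) x = {x /\<^sub>R norm x} \<and>
          hausdorff_conv (\<lambda>n. approx_proj (sphere 0 1) x (1 / real n)) (metric_proj (sphere 0 1) x))
      \<longleftrightarrow> (\<forall>x::'a. x \<noteq> 0 \<longrightarrow> unif x)"
    using E_haus by blast
  have E7: "strongly_chebyshev_on (sphere (0::'a) 1) (UNIV - {0}) \<longleftrightarrow> (\<forall>x::'a. x \<noteq> 0 \<longrightarrow> unif x)"
    unfolding strongly_chebyshev_on_def using E_cheb by blast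
  have E2: "(\<forall>x x'::'a. x \<noteq> 0 \<and> x' \<noteq> 0 \<longrightarrow>
         (\<lambda>n. rad (approx_proj (sphere 0 1) x (1 / real n)) (approx_proj (sphere 0 1) x' (1 / real n)))
           \<longlonglongrightarrow> norm (x /\<^sub>R norm x - x' /\<^sub>R norm x')) \<longleftrightarrow> (\<forall>x::'a. x \<noteq> 0 \<longrightarrow> unif x)"
    by (rule E_rad)
  show ?thesis unfolding S_def XX L E2 E3 E4 E5 E6 E7 by simp
qed

end
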